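(* Let $t\in\mathbb{R}$, $\mu>0$ and $\sigma>0$. Let $\mathcal{L}(\mu,\sigma)$ be the set of probability distributions $F$ on $\mathbb{R}$ with $\mathbb{E}^F[X]=\mu$ and $\mathbb{E}^F[X^2]=\mu^2+\sigma^2$ (for $X\sim F$), and $\mathcal{L}^+(\mu,\sigma)=\{F\in\mathcal{L}(\mu,\sigma): F(0-)=0\}$. Then \[ \sup_{F \in \mathcal{L}^+(\mu, \sigma)} \mathbb{E}^{F}[(X-t)^2_+] = \sup_{F \in \mathcal{L}(\mu, \sigma)} \mathbb{E}^{F}[(X-t)_{+}^2] = \sigma^2 + (\mu-t)_+^2. \]
   Context: For $x\in\mathbb{R}$, $(x)_+=\max\{x,0\}$. $F(0-)=\mathbb{P}(X<0)$ under $F$. $\mathbb{E}^F$ denotes expectation when $X$ has distribution $F$. *)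

theory Defs
  imports "HOL-Probability.Probability"
begin

definition moment_class :: "real \<Rightarrow> real \<Rightarrow> real measure set" where
  "moment_class \<mu> \<sigma> = {F. prob_space F \<and> sets F = sets borel \<and>
      integrable F (\<lambda>x. x) \<and> integrable F (\<lambda>x. x ^ 2) \<and>
      (\<integral>x. x \<partial>F) = \<mu> \<and> (\<integral>x. x ^ 2 \<partial>F) = \<mu> ^ 2 + \<sigma> ^ 2}"

definition moment_class_pos :: "real \<Rightarrow> real \<Rightarrow> real measure set" where
  "moment_class_pos \<mu> \<sigma> = {F \<in> moment_class \<mu> \<sigma>. measure F {..<0} = 0}"

end

theory Submission
  imports Defs
begin

definition tp :: "real \<Rightarrow> real \<Rightarrow> real \<Rightarrow> real measure" where
 "tp p A B = distr (measure_pmf (bernoulli_pmf p)) borel (\<lambda>b. if b then B else A)"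

lemma tp_ps: "prob_space (tp p A B)"
  unfolding tp_def by (rule prob_space.prob_space_distr) (auto simp: measure_pmf.prob_space_axioms)

lemma tp_sets: "sets (tp p A B) = sets borel"
  unfolding tp_def by simp

lemma tp_int:
  assumes "0 \<le> p" "p \<le> 1" and g: "g \<in> borel_measurable borel"
  shows "integrable (tp p A B) g" "(\<integral>x. g x \<partial>tp p A B) = p * g B + (1 - p) * g A"
proof -
  have m: "(\<lambda>b. if b then B else A) \<in> measurable (measure_pmf (bernoulli_pmf p)) borel" by simp
  have fin: "finite (set_pmf (bernoulli_pmf p))" by (rule finite_subset[of _ UNIV]) auto
  show "integrable (tp p A B) g"
    unfolding tp_def by (subst integrable_distr_eq[OF m g]) (rule integrable_measure_pmf_finite[OF fin])
  have "(\<integral>x. g x \<partial>tp p A B) = (\<integral>b. g (if b then B else A) \<partial>measure_pmf (bernoulli_pmf p))"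
    unfolding tp_def by (rule integral_distr[OF m g])
  also have "\<dots> = (\<Sum>b\<in>UNIV. g (if b then B else A) * pmf (bernoulli_pmf p) b)"
    by (rule integral_measure_pmf_real) auto
  also have "\<dots> = p * g B + (1 - p) * g A" using assms by (simp add: UNIV_bool)
  finally show "(\<integral>x. g x \<partial>tp p A B) = p * g B + (1 - p) * g A" .
qed

lemma tp_neg:
  assumes "0 \<le> A" "0 \<le> B"
  shows "measure (tp p A B) {..<0} = 0"
proof -
  have m: "(\<lambda>b. if b then B else A) \<in> measurable (measure_pmf (bernoulli_pmf p)) borel" by simp
  have "measure (tp p A B) {..<0} = measure (measure_pmf (bernoulli_pmf p)) ((\<lambda>b. if b then B else A) -` {..<0} \<inter> space (measure_pmf (bernoulli_pmf p)))"
    unfolding tp_def by (rule measure_distr[OF m]) simp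
  also have "(\<lambda>b. if b then B else A) -` {..<0} \<inter> space (measure_pmf (bernoulli_pmf p)) = {}"
    using assms by (auto split: if_splits)
  finally show ?thesis by simp
qed

lemma upper:
  fixes t \<mu> \<sigma> :: real
  assumes F: "F \<in> moment_class \<mu> \<sigma>"
  shows "(\<integral>x. (max (x - t) 0) ^ 2 \<partial>F) \<le> \<sigma> ^ 2 + (max (\<mu> - t) 0) ^ 2"
proof -
  define c where "c = min t \<mu>"
  note Fm = F[unfolded moment_class_def mem_Collect_eq]
  have i1: "integrable F (\<lambda>x. x)" using Fm by blast
  have i2: "integrable F (\<lambda>x. x ^ 2)" using Fm by blast
  have e1: "(\<integral>x. x \<partial>F) = \<mu>" using Fm by blast
  have e2: "(\<integral>x. x ^ 2 \<partial>F) = \<mu> ^ 2 + \<sigma> ^ 2" using Fm by blast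
  have ps: "prob_space F" using Fm by blast
  have sF: "sets F = sets borel" using Fm by blast
  have fm: "finite_measure F" using ps by (rule prob_space.finite_measure)
  have sp: "measure F (space F) = 1" by (rule prob_space.prob_space[OF ps])
  have eq: "\<And>x. (x - c) ^ 2 = x ^ 2 - (2 * c) * x + c ^ 2" by (simp add: power2_eq_square algebra_simps)
  have i3: "integrable F (\<lambda>x. (2 * c) * x)" by (rule integrable_mult_right) (simp add: i1)
  have i4: "integrable F (\<lambda>x. x ^ 2 - (2 * c) * x)" by (rule Bochner_Integration.integrable_diff[OF i2 i3])
  have i5: "integrable F (\<lambda>x. c ^ 2)" by (rule finite_measure.integrable_const[OF fm])
  have ic': "integrable F (\<lambda>x. x ^ 2 - (2 * c) * x + c ^ 2)" by (rule Bochner_Integration.integrable_add[OF i4 i5])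
  have ic: "integrable F (\<lambda>x. (x - c) ^ 2)" unfolding eq by (rule ic')
  have j1: "(\<integral>x. (x - c) ^ 2 \<partial>F) = (\<integral>x. x ^ 2 - (2 * c) * x + c ^ 2 \<partial>F)" unfolding eq ..
  have j2: "(\<integral>x. x ^ 2 - (2 * c) * x + c ^ 2 \<partial>F) = (\<integral>x. x ^ 2 - (2 * c) * x \<partial>F) + (\<integral>x. c ^ 2 \<partial>F)"
    by (rule Bochner_Integration.integral_add[OF i4 i5])
  have j3: "(\<integral>x. x ^ 2 - (2 * c) * x \<partial>F) = (\<integral>x. x ^ 2 \<partial>F) - (\<integral>x. (2 * c) * x \<partial>F)"
    by (rule Bochner_Integration.integral_diff[OF i2 i3])
  have j4: "(\<integral>x. (2 * c) * x \<partial>F) = (2 * c) * (\<integral>x. x \<partial>F)"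
    by (rule Bochner_Integration.integral_mult_right_zero)
  have j5: "(\<integral>x. c ^ 2 \<partial>F) = c ^ 2" using sp by simp
  have vc0: "(\<integral>x. (x - c) ^ 2 \<partial>F) = \<mu> ^ 2 + \<sigma> ^ 2 - 2 * c * \<mu> + c ^ 2"
    unfolding j1 j2 j3 j4 j5 e1 e2 by simp
  have vc: "(\<integral>x. (x - c) ^ 2 \<partial>F) = \<sigma> ^ 2 + (\<mu> - c) ^ 2" unfolding vc0 by (simp add: power2_eq_square algebra_simps)
  have pw: "(max (x - t) 0) ^ 2 \<le> (x - c) ^ 2" for x
  proof -
    have "max (x - t) 0 \<le> \<bar>x - c\<bar>" unfolding c_def by linarith
    then have "(max (x - t) 0) ^ 2 \<le> \<bar>x - c\<bar> ^ 2" by (rule power_mono) simp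
    then show ?thesis by simp
  qed
  have meas: "(\<lambda>x. (max (x - t) 0) ^ 2) \<in> borel_measurable F"
    unfolding measurable_cong_sets[OF sF refl] by measurable
  have il: "integrable F (\<lambda>x. (max (x - t) 0) ^ 2)"
    by (rule Bochner_Integration.integrable_bound[OF ic meas]) (rule AE_I2, simp add: pw)
  have "(\<integral>x. (max (x - t) 0) ^ 2 \<partial>F) \<le> (\<integral>x. (x - c) ^ 2 \<partial>F)"
    by (rule integral_mono[OF il ic pw])
  also have "\<dots> = \<sigma> ^ 2 + (max (\<mu> - t) 0) ^ 2" proof -
    have "\<mu> - c = max (\<mu> - t) 0" unfolding c_def by linarith
    then show ?thesis using vc by simp
  qed
  finally show ?thesis .
qed

lemma mom:
  fixes s \<mu> \<sigma> :: real assumes "s > 0"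
  defines "p \<equiv> s ^ 2 / (1 + s ^ 2)"
  shows "p * (\<mu> + \<sigma> / s) + (1 - p) * (\<mu> - \<sigma> * s) = \<mu>"
    "p * (\<mu> + \<sigma> / s) ^ 2 + (1 - p) * (\<mu> - \<sigma> * s) ^ 2 = \<mu> ^ 2 + \<sigma> ^ 2"
proof -
  have ps: "1 + s ^ 2 \<noteq> 0" by (smt (verit) zero_le_power2)
  have q1: "1 - p = 1 / (1 + s^2)" unfolding p_def using ps by (simp add: field_simps)
  have q2: "p * (\<sigma> / s) = (1 - p) * (\<sigma> * s)" unfolding q1 unfolding p_def using assms ps
    by (simp add: field_simps power2_eq_square)
  show "p * (\<mu> + \<sigma> / s) + (1 - p) * (\<mu> - \<sigma> * s) = \<mu>"
    using q2 by (simp add: algebra_simps)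
  have q3a: "p * (\<sigma> / s)^2 = \<sigma>^2 / (1 + s^2)" unfolding p_def using assms ps
    by (simp add: field_simps power2_eq_square)
  have q3b: "(1 - p) * (\<sigma> * s)^2 = \<sigma>^2 * s^2 / (1 + s^2)" unfolding q1 by (simp add: power_mult_distrib)
  have q3: "p * (\<sigma> / s)^2 + (1 - p) * (\<sigma> * s)^2 = \<sigma>^2" unfolding q3a q3b
    proof -
    have "\<sigma>^2 + \<sigma>^2 * s^2 = \<sigma>^2 * (1 + s^2)" by (simp add: algebra_simps)
    then show "\<sigma>^2 / (1 + s^2) + \<sigma>^2 * s^2 / (1 + s^2) = \<sigma>^2"
      using ps by (simp add: add_divide_distrib[symmetric])
  qed
  have "p * (\<mu> + \<sigma> / s) ^ 2 + (1 - p) * (\<mu> - \<sigma> * s) ^ 2 = \<mu>^2 + 2 * \<mu> * (p * (\<sigma> / s) - (1 - p) * (\<sigma> * s)) + (p * (\<sigma> / s)^2 + (1 - p) * (\<sigma> * s)^2)"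
    by (simp add: power2_eq_square algebra_simps)
  then show "p * (\<mu> + \<sigma> / s) ^ 2 + (1 - p) * (\<mu> - \<sigma> * s) ^ 2 = \<mu> ^ 2 + \<sigma> ^ 2"
    using q2 q3 by simp
qed

definition hh :: "real \<Rightarrow> real \<Rightarrow> real \<Rightarrow> real \<Rightarrow> real" where
  "hh t \<mu> \<sigma> s = ((max (s * (\<mu> - t) + \<sigma>) 0) ^ 2 + (max (\<mu> - \<sigma> * s - t) 0) ^ 2) / (1 + s ^ 2)"

lemma smax: "s > 0 \<Longrightarrow> s ^ 2 * (max y 0) ^ 2 = (max (s * y) 0) ^ 2" for s y :: real
proof -
  assume s: "s > 0"
  have "max (s * y) 0 = s * max y 0"
  proof (cases "y \<le> 0")
    case True
    then have "s * y \<le> 0" using s by (simp add: mult_nonneg_nonpos)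
    then show ?thesis using True by simp
  next
    case False
    then have "s * y \<ge> 0" using s by simp
    then show ?thesis using False by simp
  qed
  then show ?thesis by (simp add: power_mult_distrib)
qed

lemma lower_pt:
  fixes t \<mu> \<sigma> s :: real
  assumes "\<mu> > 0" "\<sigma> > 0" "s > 0" "\<sigma> * s \<le> \<mu>"
  shows "ereal (hh t \<mu> \<sigma> s) \<le> (SUP F\<in>moment_class_pos \<mu> \<sigma>. ereal (\<integral>x. (max (x - t) 0) ^ 2 \<partial>F))"
proof -
  define p where "p = s ^ 2 / (1 + s ^ 2)"
  define A where "A = \<mu> - \<sigma> * s"
  define B where "B = \<mu> + \<sigma> / s"
  have ps: "1 + s ^ 2 > 0" by (simp add: add_pos_nonneg)
  have q1: "1 - p = 1 / (1 + s ^ 2)" unfolding p_def using ps by (simp add: field_simps)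
  have p00: "0 \<le> p" unfolding p_def using ps by simp
  have "0 \<le> 1 - p" unfolding q1 using ps by simp
  then have p0: "0 \<le> p" "p \<le> 1" using p00 by linarith+
  have "0 < \<sigma> / s" using assms by simp
  then have A0: "0 \<le> A" "0 \<le> B" unfolding A_def B_def using assms by linarith+
  have m1: "p * B + (1 - p) * A = \<mu>" and m2: "p * B ^ 2 + (1 - p) * A ^ 2 = \<mu> ^ 2 + \<sigma> ^ 2"
    unfolding p_def A_def B_def by (rule mom[OF assms(3)])+
  let ?F = "tp p A B"
  have g1: "(\<lambda>x::real. x) \<in> borel_measurable borel" by simp
  have g2: "(\<lambda>x::real. x ^ 2) \<in> borel_measurable borel" by simp
  have f1: "integrable ?F (\<lambda>x. x)" by (rule tp_int(1)[OF p0 g1])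
  have f1': "(\<integral>x. x \<partial>?F) = \<mu>" unfolding tp_int(2)[OF p0 g1] by (rule m1)
  have f2: "integrable ?F (\<lambda>x. x ^ 2)" by (rule tp_int(1)[OF p0 g2])
  have f2': "(\<integral>x. x ^ 2 \<partial>?F) = \<mu> ^ 2 + \<sigma> ^ 2" unfolding tp_int(2)[OF p0 g2] by (rule m2)
  have "?F \<in> moment_class \<mu> \<sigma>" unfolding moment_class_def
    by (intro CollectI conjI tp_ps tp_sets f1 f1' f2 f2')
  then have mem: "?F \<in> moment_class_pos \<mu> \<sigma>"
    unfolding moment_class_pos_def by (intro CollectI conjI tp_neg[OF A0])
  have "(\<integral>x. (max (x - t) 0) ^ 2 \<partial>?F) = p * (max (B - t) 0) ^ 2 + (1 - p) * (max (A - t) 0) ^ 2"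
    by (rule tp_int(2)[OF p0]) simp
  also have "\<dots> = hh t \<mu> \<sigma> s"
  proof -
    have "s ^ 2 * (max (B - t) 0) ^ 2 = (max (s * (B - t)) 0) ^ 2" using smax assms by blast
    also have "s * (B - t) = s * (\<mu> - t) + \<sigma>" unfolding B_def using assms by (simp add: algebra_simps)
    finally have k: "s ^ 2 * (max (B - t) 0) ^ 2 = (max (s * (\<mu> - t) + \<sigma>) 0) ^ 2" .
    have "p * (max (B - t) 0) ^ 2 + (1 - p) * (max (A - t) 0) ^ 2
       = (s ^ 2 * (max (B - t) 0) ^ 2) / (1 + s ^ 2) + (max (A - t) 0) ^ 2 / (1 + s ^ 2)"
      unfolding q1 unfolding p_def by simp
    also have "\<dots> = (s ^ 2 * (max (B - t) 0) ^ 2 + (max (A - t) 0) ^ 2) / (1 + s ^ 2)"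
      by (simp add: add_divide_distrib)
    finally show ?thesis unfolding hh_def k A_def by simp
  qed
  finally have "ereal (hh t \<mu> \<sigma> s) = ereal (\<integral>x. (max (x - t) 0) ^ 2 \<partial>?F)" by simp
  also have "\<dots> \<le> (SUP F\<in>moment_class_pos \<mu> \<sigma>. ereal (\<integral>x. (max (x - t) 0) ^ 2 \<partial>F))"
    by (rule SUP_upper[OF mem])
  finally show ?thesis .
qed

lemma lower:
  fixes t \<mu> \<sigma> :: real
  assumes "\<mu> > 0" "\<sigma> > 0"
  shows "ereal (\<sigma> ^ 2 + (max (\<mu> - t) 0) ^ 2) \<le> (SUP F\<in>moment_class_pos \<mu> \<sigma>. ereal (\<integral>x. (max (x - t) 0) ^ 2 \<partial>F))"
proof -
  have nz: "\<And>s::real. 1 + s ^ 2 \<noteq> 0" by (smt (verit) zero_le_power2)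
  have c: "continuous_on UNIV (hh t \<mu> \<sigma>)" unfolding hh_def
    by (intro continuous_intros) (simp add: nz)
  have "(hh t \<mu> \<sigma> \<longlongrightarrow> hh t \<mu> \<sigma> 0) (at 0)" using c by (simp add: continuous_on_def)
  then have "(hh t \<mu> \<sigma> \<longlongrightarrow> hh t \<mu> \<sigma> 0) (at_right 0)" by (rule tendsto_within_subset) simp
  then have lim: "((\<lambda>s. ereal (hh t \<mu> \<sigma> s)) \<longlongrightarrow> ereal (hh t \<mu> \<sigma> 0)) (at_right 0)"
    by (rule tendsto_ereal)
  have ev: "eventually (\<lambda>s. ereal (hh t \<mu> \<sigma> s) \<le> (SUP F\<in>moment_class_pos \<mu> \<sigma>. ereal (\<integral>x. (max (x - t) 0) ^ 2 \<partial>F))) (at_right 0)"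
  proof -
    have "eventually (\<lambda>s. s < \<mu> / \<sigma>) (at_right (0::real))"
      using assms unfolding eventually_at_right_field by (intro exI[of _ "\<mu> / \<sigma>"]) auto
    moreover have "eventually (\<lambda>s. s > (0::real)) (at_right 0)" by (rule eventually_at_right_less)
    ultimately show ?thesis
    proof eventually_elim
      case (elim s)
      then have "s * \<sigma> < \<mu>" using assms by (simp add: pos_less_divide_eq)
      then have "\<sigma> * s \<le> \<mu>" by (simp add: mult.commute)
      then show ?case using lower_pt assms elim by blast
    qed
  qed
  have "ereal (hh t \<mu> \<sigma> 0) \<le> (SUP F\<in>moment_class_pos \<mu> \<sigma>. ereal (\<integral>x. (max (x - t) 0) ^ 2 \<partial>F))"
    by (rule tendsto_upperbound[OF lim ev trivial_limit_at_right_real])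
  moreover have "hh t \<mu> \<sigma> 0 = \<sigma> ^ 2 + (max (\<mu> - t) 0) ^ 2" unfolding hh_def using assms by simp
  ultimately show ?thesis by simp
qed

theorem corollary2:
  fixes t \<mu> \<sigma> :: real
  assumes "\<mu> > 0" and "\<sigma> > 0"
  shows "(SUP F\<in>moment_class_pos \<mu> \<sigma>. ereal (\<integral>x. (max (x - t) 0) ^ 2 \<partial>F))
           = (SUP F\<in>moment_class \<mu> \<sigma>. ereal (\<integral>x. (max (x - t) 0) ^ 2 \<partial>F))
       \<and> (SUP F\<in>moment_class \<mu> \<sigma>. ereal (\<integral>x. (max (x - t) 0) ^ 2 \<partial>F))
           = ereal (\<sigma> ^ 2 + (max (\<mu> - t) 0) ^ 2)"
proof -
  let ?P = "(SUP F\<in>moment_class_pos \<mu> \<sigma>. ereal (\<integral>x. (max (x - t) 0) ^ 2 \<partial>F))"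
  let ?A = "(SUP F\<in>moment_class \<mu> \<sigma>. ereal (\<integral>x. (max (x - t) 0) ^ 2 \<partial>F))"
  let ?V = "ereal (\<sigma> ^ 2 + (max (\<mu> - t) 0) ^ 2)"
  have sub: "moment_class_pos \<mu> \<sigma> \<subseteq> moment_class \<mu> \<sigma>" unfolding moment_class_pos_def by blast
  have PA: "?P \<le> ?A" by (rule SUP_subset_mono[OF sub order_refl])
  have AV: "?A \<le> ?V"
  proof (rule SUP_least)
    fix F assume "F \<in> moment_class \<mu> \<sigma>"
    then have "(\<integral>x. (max (x - t) 0) ^ 2 \<partial>F) \<le> \<sigma> ^ 2 + (max (\<mu> - t) 0) ^ 2" by (rule upper)
    then show "ereal (\<integral>x. (max (x - t) 0) ^ 2 \<partial>F) \<le> ?V" by simp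
  qed
  have VP: "?V \<le> ?P" by (rule lower[OF assms])
  have e1: "?P = ?A" by (rule antisym[OF PA order_trans[OF AV VP]])
  have e2: "?A = ?V" by (rule antisym[OF AV order_trans[OF VP PA]])
  show ?thesis using e1 e2 by (rule conjI)
qed

end
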